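(* For all $\alpha\in(0,1)$ and all integers $s=1,2,3,\dots$, $$\frac{1-\alpha}{(s+1)^\alpha}<a_s<\frac{1-\alpha}{s^\alpha},\qquad \frac{\alpha(1-\alpha)}{(s+2)^{\alpha+1}}<a_s-a_{s+1}<\frac{\alpha(1-\alpha)}{s^{\alpha+1}},\qquad \frac{\alpha(1-\alpha)}{12(s+1)^{\alpha+1}}<b_s<\frac{\alpha(1-\alpha)}{12 s^{\alpha+1}}.$$
   Context: For $l\ge 0$: $a_l=a_l^{(\alpha)}=(l+1)^{1-\alpha}-l^{1-\alpha}$ and $b_l=b_l^{(\alpha)}=\frac{1}{2-\alpha}\left[(l+1)^{2-\alpha}-l^{2-\alpha}\right]-\frac12\left[(l+1)^{1-\alpha}+l^{1-\alpha}\right]$. *)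

theory Defs
  imports Complex_Main
begin

definition a_coef :: "real \<Rightarrow> nat \<Rightarrow> real" where
  "a_coef \<alpha> l = (real l + 1) powr (1 - \<alpha>) - (real l) powr (1 - \<alpha>)"

definition b_coef :: "real \<Rightarrow> nat \<Rightarrow> real" where
  "b_coef \<alpha> l = 1 / (2 - \<alpha>) * ((real l + 1) powr (2 - \<alpha>) - (real l) powr (2 - \<alpha>))
                 - 1 / 2 * ((real l + 1) powr (1 - \<alpha>) + (real l) powr (1 - \<alpha>))"

end

theory Submission
  imports Defs
begin

lemma mvt_pow:
  fixes x y r :: real
  assumes "0 < x" "x < y"
  shows "\<exists>z. x < z \<and> z < y \<and> y powr r - x powr r = (y - x) * (r * z powr (r - 1))"
proof -
  have "\<exists>z. x < z \<and> z < y \<and> (\<lambda>t. t powr r) y - (\<lambda>t. t powr r) x = (y - x) * (r * z powr (r - 1))"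
    by (rule MVT2[OF assms(2)], rule has_real_derivative_powr, use assms in auto)
  then show ?thesis by simp
qed

lemma partA:
  fixes \<alpha> :: real and s :: nat
  assumes "0 < \<alpha>" "\<alpha> < 1" "1 \<le> s"
  shows "(1 - \<alpha>) / (real s + 1) powr \<alpha> < a_coef \<alpha> s
       \<and> a_coef \<alpha> s < (1 - \<alpha>) / (real s) powr \<alpha>"
proof -
  have s0: "real s > 0" using assms by simp
  obtain z where z: "real s < z" "z < real s + 1"
    "(real s + 1) powr (1 - \<alpha>) - real s powr (1 - \<alpha>) = (real s + 1 - real s) * ((1 - \<alpha>) * z powr (1 - \<alpha> - 1))"
    using mvt_pow[OF s0, of "real s + 1" "1 - \<alpha>"] by auto
  have a: "a_coef \<alpha> s = (1 - \<alpha>) * z powr (- \<alpha>)" using z(3) by (simp add: a_coef_def)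
  have "(real s + 1) powr (- \<alpha>) < z powr (- \<alpha>)"
    by (rule powr_less_mono2_neg) (use assms s0 z in auto)
  moreover have "z powr (- \<alpha>) < real s powr (- \<alpha>)"
    by (rule powr_less_mono2_neg) (use assms s0 z in auto)
  ultimately have "(1 - \<alpha>) * (real s + 1) powr (- \<alpha>) < (1 - \<alpha>) * z powr (- \<alpha>)"
     "(1 - \<alpha>) * z powr (- \<alpha>) < (1 - \<alpha>) * real s powr (- \<alpha>)"
    using assms by auto
  then show ?thesis unfolding a by (simp add: powr_minus_divide)
qed

lemma partB:
  fixes \<alpha> :: real and s :: nat
  assumes "0 < \<alpha>" "\<alpha> < 1" "1 \<le> s"
  shows "\<alpha> * (1 - \<alpha>) / (real s + 2) powr (\<alpha> + 1) < a_coef \<alpha> s - a_coef \<alpha> (s + 1)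
       \<and> a_coef \<alpha> s - a_coef \<alpha> (s + 1) < \<alpha> * (1 - \<alpha>) / (real s) powr (\<alpha> + 1)"
proof -
  define p where "p = 1 - \<alpha>"
  have s0: "real s > 0" using assms by simp
  define g where "g t = (t + 1) powr p - t powr p" for t :: real
  have "\<exists>z. real s < z \<and> z < real s + 1 \<and> g (real s + 1) - g (real s)
     = (real s + 1 - real s) * (p * (z + 1) powr (p - 1) - p * z powr (p - 1))"
    unfolding g_def
    by (rule MVT2) (use s0 in \<open>auto intro!: derivative_eq_intros\<close>)
  then obtain z where z: "real s < z" "z < real s + 1"
    "g (real s + 1) - g (real s) = p * ((z + 1) powr (p - 1) - z powr (p - 1))"
    by (auto simp: algebra_simps)
  have z0: "z > 0" using z s0 by simp
  obtain w where w: "z < w" "w < z + 1"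
    "(z + 1) powr (p - 1) - z powr (p - 1) = (z + 1 - z) * ((p - 1) * w powr (p - 1 - 1))"
    using mvt_pow[OF z0, of "z + 1" "p - 1"] by auto
  have e: "p - 1 - 1 = - (\<alpha> + 1)" by (simp add: p_def)
  have diff: "a_coef \<alpha> s - a_coef \<alpha> (s + 1) = \<alpha> * (1 - \<alpha>) * w powr (- (\<alpha> + 1))"
  proof -
    have "a_coef \<alpha> (s + 1) - a_coef \<alpha> s = g (real s + 1) - g (real s)"
      by (simp add: a_coef_def g_def p_def add.commute add.left_commute)
    also have "\<dots> = p * (p - 1) * w powr (- (\<alpha> + 1))" using z(3) w(3) e by simp
    finally show ?thesis by (simp add: p_def algebra_simps)
  qed
  have c: "\<alpha> * (1 - \<alpha>) > 0" using assms by simp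
  have "(real s + 2) powr (- (\<alpha> + 1)) < w powr (- (\<alpha> + 1))"
    by (rule powr_less_mono2_neg) (use assms s0 z w in auto)
  moreover have "w powr (- (\<alpha> + 1)) < real s powr (- (\<alpha> + 1))"
    by (rule powr_less_mono2_neg) (use assms s0 z w in auto)
  ultimately have "\<alpha> * (1 - \<alpha>) * (real s + 2) powr (- (\<alpha> + 1)) < \<alpha> * (1 - \<alpha>) * w powr (- (\<alpha> + 1))"
     "\<alpha> * (1 - \<alpha>) * w powr (- (\<alpha> + 1)) < \<alpha> * (1 - \<alpha>) * real s powr (- (\<alpha> + 1))"
    using c by (auto intro: mult_strict_left_mono simp del: minus_add_distrib)
  moreover have eq: "\<And>x::real. x powr (- (\<alpha> + 1)) = 1 / x powr (\<alpha> + 1)" by (rule powr_minus_divide)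
  ultimately show ?thesis unfolding diff eq by simp
qed

lemma partC_aux:
  fixes \<alpha> c :: real and s :: nat
  assumes "0 < \<alpha>" "\<alpha> < 1" "1 \<le> s"
  shows "\<exists>z \<eta>. 0 < z \<and> real s < \<eta> \<and> \<eta> < real s + 1 \<and>
     b_coef \<alpha> s - c / 12 = z\<^sup>2 * (\<alpha> * (1 - \<alpha>) * \<eta> powr (- (\<alpha> + 1)) - c)"
proof -
  define p where "p = 1 - \<alpha>"
  define q where "q = 2 - \<alpha>"
  define m where "m = real s + 1 / 2"
  have s0: "real s \<ge> 1" using assms by simp
  have q0: "q \<noteq> 0" using assms by (simp add: q_def)
  have qp: "q - 1 = p" by (simp add: p_def q_def)
  define k where "k t = ((m + t) powr q / q - (m - t) powr q / q) - t * ((m - t) powr p + (m + t) powr p)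
      - 2 * c * t ^ 3 / 3" for t :: real
  define D where "D t = - t * (p * (m + t) powr (p - 1) - p * (m - t) powr (p - 1)) - 2 * c * t\<^sup>2" for t :: real
  have der: "(k has_real_derivative D t) (at t)" if "0 \<le> t" "t \<le> 1 / 2" for t
  proof -
    have "m - t > 0" "m + t > 0" using that s0 by (auto simp: m_def)
    then show ?thesis unfolding k_def D_def
      using q0 by (auto intro!: derivative_eq_intros simp: qp algebra_simps power2_eq_square)
  qed
  obtain z where z: "0 < z" "z < 1 / 2" "k (1 / 2) - k 0 = (1 / 2 - 0) * D z"
    using MVT2[of 0 "1/2" k D] der by auto
  have mz: "m - z > 0" using z s0 by (auto simp: m_def)
  obtain \<eta> where eta: "m - z < \<eta>" "\<eta> < m + z"
    "(m + z) powr (p - 1) - (m - z) powr (p - 1) = (m + z - (m - z)) * ((p - 1) * \<eta> powr (p - 1 - 1))"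
    using mvt_pow[OF mz, of "m + z" "p - 1"] z by auto
  have e: "p - 1 - 1 = - (\<alpha> + 1)" by (simp add: p_def)
  have k0: "k 0 = 0" by (simp add: k_def)
  have k1: "k (1 / 2) = b_coef \<alpha> s - c / 12"
    unfolding k_def b_coef_def m_def p_def q_def by (simp add: algebra_simps power_divide)
  have Dz: "D z = 2 * z\<^sup>2 * (\<alpha> * (1 - \<alpha>) * \<eta> powr (- (\<alpha> + 1)) - c)"
  proof -
    have "D z = - z * p * ((m + z) powr (p - 1) - (m - z) powr (p - 1)) - 2 * c * z\<^sup>2"
      by (simp add: D_def algebra_simps)
    also have "\<dots> = - z * p * (2 * z * ((p - 1) * \<eta> powr (- (\<alpha> + 1)))) - 2 * c * z\<^sup>2"
      using eta(3) e by simp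
    finally show ?thesis by (simp add: p_def algebra_simps power2_eq_square)
  qed
  show ?thesis
  proof (intro exI conjI)
    show "0 < z" by fact
    show "real s < \<eta>" "\<eta> < real s + 1" using eta z by (auto simp: m_def)
    show "b_coef \<alpha> s - c / 12 = z\<^sup>2 * (\<alpha> * (1 - \<alpha>) * \<eta> powr (- (\<alpha> + 1)) - c)"
      using z(3) k0 k1 Dz by simp
  qed
qed

lemma partC:
  fixes \<alpha> :: real and s :: nat
  assumes "0 < \<alpha>" "\<alpha> < 1" "1 \<le> s"
  shows "\<alpha> * (1 - \<alpha>) / (12 * (real s + 1) powr (\<alpha> + 1)) < b_coef \<alpha> s
       \<and> b_coef \<alpha> s < \<alpha> * (1 - \<alpha>) / (12 * (real s) powr (\<alpha> + 1))"
proof -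
  have s0: "real s > 0" using assms by simp
  have c: "\<alpha> * (1 - \<alpha>) > 0" using assms by simp
  have eq: "\<And>x::real. x powr (- (\<alpha> + 1)) = 1 / x powr (\<alpha> + 1)" by (rule powr_minus_divide)
  obtain z \<eta> where A: "0 < z" "real s < \<eta>" "\<eta> < real s + 1"
    "b_coef \<alpha> s - \<alpha> * (1 - \<alpha>) * (real s + 1) powr (- (\<alpha> + 1)) / 12
     = z\<^sup>2 * (\<alpha> * (1 - \<alpha>) * \<eta> powr (- (\<alpha> + 1)) - \<alpha> * (1 - \<alpha>) * (real s + 1) powr (- (\<alpha> + 1)))"
    using partC_aux[OF assms, of "\<alpha> * (1 - \<alpha>) * (real s + 1) powr (- (\<alpha> + 1))"] by blast
  have "(real s + 1) powr (- (\<alpha> + 1)) < \<eta> powr (- (\<alpha> + 1))"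
    by (rule powr_less_mono2_neg) (use assms s0 A in auto)
  then have "\<alpha> * (1 - \<alpha>) * (real s + 1) powr (- (\<alpha> + 1)) < \<alpha> * (1 - \<alpha>) * \<eta> powr (- (\<alpha> + 1))"
    using c by (auto intro: mult_strict_left_mono simp del: minus_add_distrib)
  then have "0 < z\<^sup>2 * (\<alpha> * (1 - \<alpha>) * \<eta> powr (- (\<alpha> + 1)) - \<alpha> * (1 - \<alpha>) * (real s + 1) powr (- (\<alpha> + 1)))"
    using A(1) by (simp del: minus_add_distrib)
  then have 1: "\<alpha> * (1 - \<alpha>) * (real s + 1) powr (- (\<alpha> + 1)) / 12 < b_coef \<alpha> s"
    using A(4) by (simp del: minus_add_distrib)
  obtain z' \<eta>' where B: "0 < z'" "real s < \<eta>'" "\<eta>' < real s + 1"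
    "b_coef \<alpha> s - \<alpha> * (1 - \<alpha>) * (real s) powr (- (\<alpha> + 1)) / 12
     = z'\<^sup>2 * (\<alpha> * (1 - \<alpha>) * \<eta>' powr (- (\<alpha> + 1)) - \<alpha> * (1 - \<alpha>) * (real s) powr (- (\<alpha> + 1)))"
    using partC_aux[OF assms, of "\<alpha> * (1 - \<alpha>) * (real s) powr (- (\<alpha> + 1))"] by blast
  have "\<eta>' powr (- (\<alpha> + 1)) < (real s) powr (- (\<alpha> + 1))"
    by (rule powr_less_mono2_neg) (use assms s0 B in auto)
  then have "\<alpha> * (1 - \<alpha>) * \<eta>' powr (- (\<alpha> + 1)) < \<alpha> * (1 - \<alpha>) * (real s) powr (- (\<alpha> + 1))"
    using c by (auto intro: mult_strict_left_mono simp del: minus_add_distrib)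
  then have "z'\<^sup>2 * (\<alpha> * (1 - \<alpha>) * \<eta>' powr (- (\<alpha> + 1)) - \<alpha> * (1 - \<alpha>) * (real s) powr (- (\<alpha> + 1))) < 0"
    using B(1) by (simp add: mult_pos_neg del: minus_add_distrib)
  then have 2: "b_coef \<alpha> s < \<alpha> * (1 - \<alpha>) * (real s) powr (- (\<alpha> + 1)) / 12"
    using B(4) by (simp del: minus_add_distrib)
  from 1 2 show ?thesis unfolding eq by simp
qed

theorem lemma2:
  fixes \<alpha> :: real and s :: nat
  assumes "0 < \<alpha>" "\<alpha> < 1" "1 \<le> s"
  shows "(1 - \<alpha>) / (real s + 1) powr \<alpha> < a_coef \<alpha> s
       \<and> a_coef \<alpha> s < (1 - \<alpha>) / (real s) powr \<alpha>
       \<and> \<alpha> * (1 - \<alpha>) / (real s + 2) powr (\<alpha> + 1) < a_coef \<alpha> s - a_coef \<alpha> (s + 1)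
       \<and> a_coef \<alpha> s - a_coef \<alpha> (s + 1) < \<alpha> * (1 - \<alpha>) / (real s) powr (\<alpha> + 1)
       \<and> \<alpha> * (1 - \<alpha>) / (12 * (real s + 1) powr (\<alpha> + 1)) < b_coef \<alpha> s
       \<and> b_coef \<alpha> s < \<alpha> * (1 - \<alpha>) / (12 * (real s) powr (\<alpha> + 1))"
  using partA[OF assms] partB[OF assms] partC[OF assms] by blast

end
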